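(* Either let all graphs below be undirected, or let all be directed. Let $D_0$ be a graph on $k$ vertices $v_1,\dots,v_k$ and let $D_1,\dots,D_k$ be graphs; let $f_i=f(D_i)$ and $n_i=n(D_i)$ for $0\le i\le k$, and for each $0\leq i\leq k$ let $R_i$ be a nonempty bad set of $D_i$. Let $D$ be obtained from the disjoint union of $D_1,\dots,D_k$ by adding, for every arc (resp. edge) $v_iv_j$ of $D_0$, all arcs from every vertex of $R_i\subseteq V(D_i)$ to every vertex of $R_j\subseteq V(D_j)$ (resp. all edges between $R_i$ and $R_j$). Then: \begin{enumerate} \item $n(D)=n_1+\dots+n_k$ and $f(D)\geq f_0+f_1+\dots+f_k$; \item if $R_i$ is an inclusion-wise minimal bad set of $D_i$ for every $1\leq i\leq k$, then $f(D)=\sum_{0\le i\le k} f_i$ and $R=\bigcup_{v_i\in R_0}R_i$ is a bad set of $D$; \item if moreover $R_1,\dots,R_k$ are cliques of size at most $c$, the underlying graphs of $D_1,\dots,D_k$ are chordal and have treewidth at most $t$, and $D_0$ has treewidth at most $t_0$, then $D$ has treewidth at most $\max\bigl(t,\,c(t_0+1)-1\bigr)$. \end{enumerate}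
   Context: Undirected graphs are finite and simple; directed graphs are oriented graphs (no loops, no multiple arcs, no antiparallel arcs). $n(H)$ is the number of vertices of $H$; $f(H)$ is the minimum size of a feedback vertex set, i.e. of a set $F\subseteq V(H)$ such that $H-F$ has no (directed, in the directed case) cycle. A set $R\subseteq V(H)$ is bad if it is not contained in any minimum feedback vertex set of $H$. A graph is chordal if it has a vertex ordering in which, for every vertex, its neighbours preceding it form a clique. A $k$-tree is a graph with a vertex ordering $\phi$ in which, for every vertex $v$, the preceding neighbours form a clique of size exactly $\min(k,\phi(v)-1)$; a graph has treewidth at most $k$ if it is a subgraph of a $k$-tree. Treewidth and cliques of a directed graph refer to its underlying undirected graph. *)

theory Defs
  imports Main
begin

(* A graph is given by a vertex set V and an edge/arc relation E.
   dir = False: undirected simple graph (E symmetric, irreflexive);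
   dir = True : oriented graph (E irreflexive, no antiparallel arcs). *)
definition graph :: "bool \<Rightarrow> 'a set \<Rightarrow> ('a \<times> 'a) set \<Rightarrow> bool" where
  "graph dir V E \<longleftrightarrow> finite V \<and> E \<subseteq> V \<times> V \<and> (\<forall>x. (x, x) \<notin> E) \<and>
     (if dir then (\<forall>x y. (x, y) \<in> E \<longrightarrow> (y, x) \<notin> E) else sym E)"

definition has_cycle :: "bool \<Rightarrow> 'a set \<Rightarrow> ('a \<times> 'a) set \<Rightarrow> bool" where
  "has_cycle dir V E \<longleftrightarrow> (\<exists>xs. distinct xs \<and> set xs \<subseteq> V \<and>
     length xs \<ge> (if dir then 2 else 3) \<and>
     (\<forall>i < length xs. (xs ! i, xs ! ((i + 1) mod length xs)) \<in> E))"

definition fvs :: "bool \<Rightarrow> 'a set \<Rightarrow> ('a \<times> 'a) set \<Rightarrow> 'a set \<Rightarrow> bool" where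
  "fvs dir V E F \<longleftrightarrow> F \<subseteq> V \<and> \<not> has_cycle dir (V - F) E"

definition fvn :: "bool \<Rightarrow> 'a set \<Rightarrow> ('a \<times> 'a) set \<Rightarrow> nat" where
  "fvn dir V E = Min {card F | F. fvs dir V E F}"

definition min_fvs :: "bool \<Rightarrow> 'a set \<Rightarrow> ('a \<times> 'a) set \<Rightarrow> 'a set \<Rightarrow> bool" where
  "min_fvs dir V E F \<longleftrightarrow> fvs dir V E F \<and> card F = fvn dir V E"

definition bad :: "bool \<Rightarrow> 'a set \<Rightarrow> ('a \<times> 'a) set \<Rightarrow> 'a set \<Rightarrow> bool" where
  "bad dir V E R \<longleftrightarrow> R \<subseteq> V \<and> \<not> (\<exists>F. min_fvs dir V E F \<and> R \<subseteq> F)"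

definition min_bad :: "bool \<Rightarrow> 'a set \<Rightarrow> ('a \<times> 'a) set \<Rightarrow> 'a set \<Rightarrow> bool" where
  "min_bad dir V E R \<longleftrightarrow> bad dir V E R \<and> (\<forall>S. S \<subset> R \<longrightarrow> \<not> bad dir V E S)"

definition und :: "('a \<times> 'a) set \<Rightarrow> ('a \<times> 'a) set" where
  "und E = E \<union> E\<inverse>"

definition clique :: "('a \<times> 'a) set \<Rightarrow> 'a set \<Rightarrow> bool" where
  "clique E S \<longleftrightarrow> (\<forall>x\<in>S. \<forall>y\<in>S. x \<noteq> y \<longrightarrow> (x, y) \<in> E)"

definition prec_nbrs :: "('a \<times> 'a) set \<Rightarrow> 'a list \<Rightarrow> nat \<Rightarrow> 'a set" where
  "prec_nbrs E xs i = {xs ! j | j. j < i \<and> (xs ! j, xs ! i) \<in> E}"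

definition chordal :: "'a set \<Rightarrow> ('a \<times> 'a) set \<Rightarrow> bool" where
  "chordal V E \<longleftrightarrow> (\<exists>xs. distinct xs \<and> set xs = V \<and>
     (\<forall>i < length xs. clique E (prec_nbrs E xs i)))"

(* k-tree; position i (0-based) corresponds to phi(v) - 1 *)
definition ktree :: "nat \<Rightarrow> 'a set \<Rightarrow> ('a \<times> 'a) set \<Rightarrow> bool" where
  "ktree k V E \<longleftrightarrow> graph False V E \<and> (\<exists>xs. distinct xs \<and> set xs = V \<and>
     (\<forall>i < length xs. clique E (prec_nbrs E xs i) \<and> card (prec_nbrs E xs i) = min k i))"

definition tw_le :: "nat \<Rightarrow> 'a set \<Rightarrow> ('a \<times> 'a) set \<Rightarrow> bool" where
  "tw_le k V E \<longleftrightarrow> (\<exists>W E'. V \<subseteq> W \<and> ktree k W E' \<and> E \<subseteq> E')"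

(* the composed graph D: vertices (i, x) with i in V(D_0), x in V(D_i) *)
definition comp_V :: "'i set \<Rightarrow> ('i \<Rightarrow> 'a set) \<Rightarrow> ('i \<times> 'a) set" where
  "comp_V I V = Sigma I V"

definition comp_E :: "'i set \<Rightarrow> ('i \<times> 'i) set \<Rightarrow> ('i \<Rightarrow> ('a \<times> 'a) set) \<Rightarrow> ('i \<Rightarrow> 'a set)
     \<Rightarrow> (('i \<times> 'a) \<times> ('i \<times> 'a)) set" where
  "comp_E I E0 E R =
     {((i, x), (i, y)) | i x y. i \<in> I \<and> (x, y) \<in> E i} \<union>
     {((i, x), (j, y)) | i j x y. (i, j) \<in> E0 \<and> x \<in> R i \<and> y \<in> R j}"

end

theory Submission
  imports Defs "HOL-Library.Product_Lexorder"
begin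


definition pp :: "('a \<Rightarrow> 'b::linorder) \<Rightarrow> 'a set \<Rightarrow> ('a \<times> 'a) set \<Rightarrow> 'a \<Rightarrow> 'a set" where
  "pp p V H v = {u \<in> V. p u < p v \<and> (u, v) \<in> H}"

lemma clique_subset: "clique E A \<Longrightarrow> B \<subseteq> A \<Longrightarrow> clique E B"
  unfolding clique_def by blast

lemma clique_mono: "clique E A \<Longrightarrow> E \<subseteq> E' \<Longrightarrow> clique E' A"
  unfolding clique_def by blast

lemma clique_insert: "clique E A \<Longrightarrow> (\<forall>a\<in>A. a \<noteq> z \<longrightarrow> (a, z) \<in> E \<and> (z, a) \<in> E) \<Longrightarrow> clique E (insert z A)"
  unfolding clique_def by auto

definition idx :: "'a list \<Rightarrow> 'a \<Rightarrow> nat" where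
  "idx xs u = (THE i. i < length xs \<and> xs ! i = u)"

lemma idx_nth: "distinct xs \<Longrightarrow> i < length xs \<Longrightarrow> idx xs (xs ! i) = i"
  unfolding idx_def by (rule the_equality) (auto simp: nth_eq_iff_index_eq)

lemma idx_in: "distinct xs \<Longrightarrow> u \<in> set xs \<Longrightarrow> idx xs u < length xs \<and> xs ! idx xs u = u"
  by (metis idx_nth in_set_conv_nth)

lemma inj_idx: "distinct xs \<Longrightarrow> inj_on (idx xs) (set xs)"
  by (metis idx_in inj_onI)

lemma pp_idx: "distinct xs \<Longrightarrow> i < length xs \<Longrightarrow> pp (idx xs) (set xs) E (xs ! i) = prec_nbrs E xs i"
proof -
  assume d: "distinct xs" and i: "i < length xs"
  show ?thesis unfolding pp_def prec_nbrs_def idx_nth[OF d i]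
  proof (intro equalityI subsetI)
    fix u assume "u \<in> {u \<in> set xs. idx xs u < i \<and> (u, xs ! i) \<in> E}"
    then have "u \<in> set xs" "idx xs u < i" "(u, xs ! i) \<in> E" by auto
    then show "u \<in> {xs ! j |j. j < i \<and> (xs ! j, xs ! i) \<in> E}"
      using idx_in[OF d] by (metis (mono_tags, lifting) mem_Collect_eq)
  next
    fix u assume "u \<in> {xs ! j |j. j < i \<and> (xs ! j, xs ! i) \<in> E}"
    then obtain j where j: "u = xs ! j" "j < i" "(xs ! j, xs ! i) \<in> E" by blast
    have "j < length xs" using j i by simp
    then show "u \<in> {u \<in> set xs. idx xs u < i \<and> (u, xs ! i) \<in> E}"
      using j idx_nth[OF d] by auto
  qed
qed

lemma earlier_idx: "distinct xs \<Longrightarrow> i < length xs \<Longrightarrow> card {u \<in> set xs. idx xs u < idx xs (xs ! i)} = i"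
proof -
  assume d: "distinct xs" and i: "i < length xs"
  have "{u \<in> set xs. idx xs u < idx xs (xs ! i)} = set (take i xs)"
  proof (intro equalityI subsetI)
    fix u assume "u \<in> {u \<in> set xs. idx xs u < idx xs (xs ! i)}"
    then have "u \<in> set xs" "idx xs u < i" using idx_nth[OF d i] by auto
    then show "u \<in> set (take i xs)" using idx_in[OF d] i
      by (metis in_set_conv_nth length_take min.absorb4 nth_take)
  next
    fix u assume "u \<in> set (take i xs)"
    then obtain j where j: "j < i" "u = xs ! j" using i by (auto simp: in_set_conv_nth)
    then show "u \<in> {u \<in> set xs. idx xs u < idx xs (xs ! i)}"
      using idx_nth[OF d] i by auto
  qed
  then show ?thesis using d i by (simp add: distinct_card)
qed

lemma max_elem:
  fixes p :: "'a \<Rightarrow> 'b::linorder"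
  assumes "finite V" "V \<noteq> {}"
  obtains z where "z \<in> V" "\<forall>u\<in>V. p u \<le> p z"
proof -
  have "Max (p ` V) \<in> p ` V" using assms by simp
  then obtain z where "z \<in> V" "p z = Max (p ` V)" by auto
  then show ?thesis using that assms by auto
qed

lemma CE:
  fixes p :: "'a \<Rightarrow> nat"
  shows "finite W \<Longrightarrow> card W = n \<Longrightarrow> sym E \<Longrightarrow> inj_on p W \<Longrightarrow>
    (\<forall>v\<in>W. clique E (pp p W E v) \<and> card (pp p W E v) = min k (card {u\<in>W. p u < p v})) \<Longrightarrow>
    C \<subseteq> W \<Longrightarrow> clique E C \<Longrightarrow>
    \<exists>C'. C \<subseteq> C' \<and> C' \<subseteq> W \<and> clique E C' \<and> card C' = min (k+1) (card W)"
proof (induction n arbitrary: W C)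
  case 0
  then show ?case by (auto simp: clique_def)
next
  case (Suc n)
  then have "W \<noteq> {}" by auto
  then obtain z where z: "z \<in> W" "\<forall>u\<in>W. p u \<le> p z" using max_elem Suc.prems(1) by metis
  define W' where "W' = W - {z}"
  have earl: "{u\<in>W. p u < p z} = W'"
  proof (intro equalityI subsetI)
    fix u assume "u \<in> {u\<in>W. p u < p z}" then show "u \<in> W'" unfolding W'_def by auto
  next
    fix u assume u: "u \<in> W'"
    then have "u \<in> W" "u \<noteq> z" unfolding W'_def by auto
    then have "p u \<noteq> p z" using Suc.prems(4) z(1) unfolding inj_on_def by metis
    then show "u \<in> {u\<in>W. p u < p z}" using z(2) \<open>u \<in> W\<close> by (simp add: order.not_eq_order_implies_strict)
  qed
  have notz: "\<And>v u. v \<in> W \<Longrightarrow> p u < p v \<Longrightarrow> u \<noteq> z" using z(2) by (metis leD)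
  have cW': "card W' = n" using Suc.prems(2) z unfolding W'_def by simp
  have ppz: "pp p W E z = {u\<in>W'. (u, z) \<in> E}" using earl unfolding pp_def by auto
  have ppW': "\<And>v. v \<in> W' \<Longrightarrow> pp p W' E v = pp p W E v"
    unfolding pp_def W'_def using notz by blast
  have eW': "\<And>v. v \<in> W' \<Longrightarrow> {u\<in>W'. p u < p v} = {u\<in>W. p u < p v}"
    unfolding W'_def using notz by blast
  have fin: "finite W'" using Suc.prems(1) W'_def by simp
  show ?case
  proof (cases "z \<in> C")
    case True
    define C' where "C' = insert z (pp p W E z)"
    have "C \<subseteq> C'" using True Suc.prems(6,7) ppz unfolding C'_def W'_def clique_def by auto
    moreover have "C' \<subseteq> W" unfolding C'_def pp_def using z by auto
    moreover have "clique E C'" unfolding C'_def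
      apply (rule clique_insert) using Suc.prems(5) z apply blast
      using ppz Suc.prems(3) by (auto simp: sym_def)
    moreover have "card C' = min (k+1) (card W)"
    proof -
      have "z \<notin> pp p W E z" unfolding pp_def by auto
      moreover have "finite (pp p W E z)" using Suc.prems(1) unfolding pp_def by auto
      ultimately have "card C' = card (pp p W E z) + 1" unfolding C'_def by simp
      also have "\<dots> = min k n + 1" using Suc.prems(5) z earl cW' by simp
      finally show ?thesis using Suc.prems(2) by simp
    qed
    ultimately show ?thesis by blast
  next
    case False
    have h1: "C \<subseteq> W'" using False Suc.prems(6) W'_def by auto
    have h2: "inj_on p W'" using Suc.prems(4) W'_def by (auto intro: inj_on_subset)
    have h3: "\<forall>v\<in>W'. clique E (pp p W' E v) \<and> card (pp p W' E v) = min k (card {u\<in>W'. p u < p v})"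
      using Suc.prems(5) ppW' eW' W'_def by auto
    obtain C' where C': "C \<subseteq> C'" "C' \<subseteq> W'" "clique E C'" "card C' = min (k+1) n"
      using Suc.IH[OF fin cW' Suc.prems(3) h2 h3 h1 Suc.prems(7)] cW' by metis
    show ?thesis
    proof (cases "k + 1 \<le> n")
      case True
      have "C' \<subseteq> W" using C'(2) W'_def by auto
      moreover have "card C' = min (k+1) (card W)" using C'(4) True Suc.prems(2) by simp
      ultimately show ?thesis using C'(1,3) by blast
    next
      case False
      then have "card C' = card W'" using C' cW' by simp
      then have CW: "C' = W'" using C'(2) fin by (simp add: card_subset_eq)
      have "card (pp p W E z) = n" using Suc.prems(5) z earl cW' False by simp
      then have "{u\<in>W'. (u, z) \<in> E} = W'" using ppz fin
        by (metis (no_types, lifting) cW' card_subset_eq mem_Collect_eq subsetI)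
      then have "clique E (insert z W')"
        using C'(3) CW Suc.prems(3) by (intro clique_insert) (auto simp: sym_def)
      moreover have "insert z W' = W" using z W'_def by auto
      ultimately show ?thesis using Suc.prems(2,6) False by auto
    qed
  qed
qed

lemma ktree_pos:
  assumes "ktree k W E"
  obtains p :: "'a \<Rightarrow> nat" where "inj_on p W" "finite W" "sym E" "E \<subseteq> W \<times> W"
    "\<forall>v\<in>W. clique E (pp p W E v) \<and> card (pp p W E v) = min k (card {u\<in>W. p u < p v})"
proof -
  obtain xs where xs: "distinct xs" "set xs = W"
    "\<forall>i < length xs. clique E (prec_nbrs E xs i) \<and> card (prec_nbrs E xs i) = min k i"
    using assms unfolding ktree_def by blast
  have g: "graph False W E" using assms unfolding ktree_def by blast
  have "\<forall>v\<in>W. clique E (pp (idx xs) W E v) \<and> card (pp (idx xs) W E v) = min k (card {u\<in>W. idx xs u < idx xs v})"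
  proof
    fix v assume "v \<in> W"
    then obtain i where i: "i < length xs" "v = xs ! i" using xs by (auto simp: in_set_conv_nth)
    show "clique E (pp (idx xs) W E v) \<and> card (pp (idx xs) W E v) = min k (card {u\<in>W. idx xs u < idx xs v})"
      using pp_idx[OF xs(1) i(1)] earlier_idx[OF xs(1) i(1)] xs i by simp
  qed
  then show ?thesis using that inj_idx[OF xs(1)] xs g unfolding graph_def by auto
qed

lemma ktree_clique_bound:
  assumes "ktree k W E" "C \<subseteq> W" "clique E C"
  shows "card C \<le> k + 1"
proof -
  obtain p :: "'a \<Rightarrow> nat" where p: "inj_on p W" "finite W" "sym E"
    "\<forall>v\<in>W. clique E (pp p W E v) \<and> card (pp p W E v) = min k (card {u\<in>W. p u < p v})"
    using ktree_pos[OF assms(1)] by metis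
  obtain C' where "C \<subseteq> C'" "C' \<subseteq> W" "card C' = min (k+1) (card W)"
    using CE[OF p(2) refl p(3) p(1) p(4) assms(2,3)] by blast
  then show ?thesis using p(2) by (metis card_mono finite_subset min.bounded_iff order.trans)
qed



lemma prec_nbrs_snoc:
  assumes "distinct (xs @ [z])" "i < length xs" "\<forall>a b. (a, b) \<in> E' \<longrightarrow> (a, b) \<in> E \<or> a = z \<or> b = z"
    "E \<subseteq> E'"
  shows "prec_nbrs E' (xs @ [z]) i = prec_nbrs E xs i"
proof -
  have "\<And>j. j < i \<Longrightarrow> ((xs @ [z]) ! j, (xs @ [z]) ! i) \<in> E' \<longleftrightarrow> (xs ! j, xs ! i) \<in> E"
  proof -
    fix j assume j: "j < i"
    have a: "(xs @ [z]) ! j = xs ! j" "(xs @ [z]) ! i = xs ! i" using j assms(2) by (auto simp: nth_append)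
    have "xs ! j \<noteq> z" "xs ! i \<noteq> z" using assms(1,2) j by auto
    then show "((xs @ [z]) ! j, (xs @ [z]) ! i) \<in> E' \<longleftrightarrow> (xs ! j, xs ! i) \<in> E"
      using a assms(3,4) by auto
  qed
  moreover have "\<And>j. j < i \<Longrightarrow> (xs @ [z]) ! j = xs ! j" using assms(2) by (auto simp: nth_append)
  ultimately show ?thesis unfolding prec_nbrs_def by (metis (no_types, lifting))
qed

lemma prec_nbrs_last:
  assumes "distinct (xs @ [z])"
  shows "prec_nbrs E (xs @ [z]) (length xs) = {u \<in> set xs. (u, z) \<in> E}"
  unfolding prec_nbrs_def
  by (auto simp: nth_append in_set_conv_nth)

lemma subset_between:
  assumes "finite C" "P \<subseteq> C" "card P \<le> m" "m \<le> card C"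
  obtains Q where "P \<subseteq> Q" "Q \<subseteq> C" "card Q = m"
proof -
  have "m - card P \<le> card (C - P)" using assms by (simp add: card_Diff_subset finite_subset)
  then obtain T where T: "T \<subseteq> C - P" "card T = m - card P" "finite T"
    using obtain_subset_with_card_n by metis
  have "card (P \<union> T) = card P + card T"
    using T assms by (intro card_Un_disjoint) (auto intro: finite_subset)
  then show ?thesis using that[of "P \<union> T"] T assms by auto
qed

lemma L:
  fixes p :: "'a \<Rightarrow> 'b::linorder"
  shows "finite V \<Longrightarrow> card V = n \<Longrightarrow> H \<subseteq> V \<times> V \<Longrightarrow> sym H \<Longrightarrow> (\<forall>x. (x, x) \<notin> H) \<Longrightarrow> inj_on p V \<Longrightarrow>
    (\<forall>v\<in>V. clique H (pp p V H v) \<and> card (pp p V H v) \<le> k) \<Longrightarrow>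
    \<exists>E'. ktree k V E' \<and> H \<subseteq> E'"
proof (induction n arbitrary: V H)
  case 0
  then have "V = {}" by auto
  then show ?case using 0 unfolding ktree_def graph_def by (auto simp: sym_def)
next
  case (Suc n)
  then have "V \<noteq> {}" by auto
  then obtain z where z: "z \<in> V" "\<forall>u\<in>V. p u \<le> p z" using max_elem Suc.prems(1) by metis
  define V' where "V' = V - {z}"
  define H' where "H' = H \<inter> (V' \<times> V')"
  have notz: "\<And>v u. v \<in> V \<Longrightarrow> p u < p v \<Longrightarrow> u \<noteq> z" using z(2) by (metis leD)
  have fin: "finite V'" using Suc.prems(1) V'_def by simp
  have cV': "card V' = n" using Suc.prems(2) z unfolding V'_def by simp
  have ppV': "\<And>v. v \<in> V' \<Longrightarrow> pp p V' H' v = pp p V H v"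
    unfolding pp_def V'_def H'_def using notz by blast
  have ppz: "pp p V H z = {u\<in>V'. (u, z) \<in> H}"
  proof (intro equalityI subsetI)
    fix u assume "u \<in> pp p V H z" then show "u \<in> {u\<in>V'. (u, z) \<in> H}" unfolding pp_def V'_def by auto
  next
    fix u assume u: "u \<in> {u\<in>V'. (u, z) \<in> H}"
    then have "u \<in> V" "u \<noteq> z" unfolding V'_def by auto
    then have "p u \<noteq> p z" using Suc.prems(6) z(1) unfolding inj_on_def by metis
    then show "u \<in> pp p V H z" using z(2) \<open>u \<in> V\<close> u unfolding pp_def
      by (simp add: order.not_eq_order_implies_strict)
  qed
  have h1: "H' \<subseteq> V' \<times> V'" unfolding H'_def by auto
  have h2: "sym H'" using Suc.prems(4) unfolding H'_def sym_def by auto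
  have h3: "\<forall>x. (x, x) \<notin> H'" using Suc.prems(5) unfolding H'_def by auto
  have h4: "inj_on p V'" using Suc.prems(6) V'_def by (auto intro: inj_on_subset)
  have h5: "\<forall>v\<in>V'. clique H' (pp p V' H' v) \<and> card (pp p V' H' v) \<le> k"
  proof
    fix v assume v: "v \<in> V'"
    have "clique H (pp p V H v)" "card (pp p V H v) \<le> k" using Suc.prems(7) v V'_def by auto
    moreover have "pp p V' H' v \<subseteq> V'" unfolding pp_def by auto
    ultimately show "clique H' (pp p V' H' v) \<and> card (pp p V' H' v) \<le> k"
      using ppV'[OF v] unfolding clique_def H'_def by auto
  qed
  obtain E0 where E0: "ktree k V' E0" "H' \<subseteq> E0" using Suc.IH[OF fin cV' h1 h2 h3 h4 h5] by metis
  obtain xs where xs: "distinct xs" "set xs = V'"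
     "\<forall>i < length xs. clique E0 (prec_nbrs E0 xs i) \<and> card (prec_nbrs E0 xs i) = min k i"
    using E0(1) unfolding ktree_def by blast
  have g0: "graph False V' E0" using E0(1) unfolding ktree_def by blast
  obtain q :: "'a \<Rightarrow> nat" where q: "inj_on q V'" "finite V'" "sym E0" "E0 \<subseteq> V' \<times> V'"
    "\<forall>v\<in>V'. clique E0 (pp q V' E0 v) \<and> card (pp q V' E0 v) = min k (card {u\<in>V'. q u < q v})"
    using ktree_pos[OF E0(1)] by metis
  define P where "P = pp p V H z"
  have PV': "P \<subseteq> V'" unfolding P_def ppz by auto
  have Pcl: "clique E0 P"
  proof -
    have "clique H P" using Suc.prems(7) z P_def by auto
    then have "clique H' P" using PV' unfolding clique_def H'_def by auto
    then show ?thesis using E0(2) clique_mono by blast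
  qed
  have Pk: "card P \<le> k" using Suc.prems(7) z P_def by auto
  obtain C where C: "P \<subseteq> C" "C \<subseteq> V'" "clique E0 C" "card C = min (k+1) (card V')"
    using CE[OF q(2) refl q(3) q(1) q(5) PV' Pcl] by metis
  have "card P \<le> min k (card V')" using Pk PV' fin by (simp add: card_mono)
  moreover have "min k (card V') \<le> card C" using C(4) by simp
  ultimately obtain Q where Q: "P \<subseteq> Q" "Q \<subseteq> C" "card Q = min k (card V')"
    using subset_between[OF finite_subset[OF C(2) fin] C(1)] by metis
  have QV': "Q \<subseteq> V'" using Q C by auto
  have zQ: "z \<notin> Q" using QV' V'_def by auto
  have Qcl: "clique E0 Q" using C(3) Q(2) clique_subset by blast
  define E' where "E' = E0 \<union> ({z} \<times> Q) \<union> (Q \<times> {z})"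
  have dz: "distinct (xs @ [z])" using xs V'_def by auto
  have sz: "set (xs @ [z]) = V" using xs V'_def z by auto
  have gE': "graph False V E'"
    unfolding graph_def E'_def using Suc.prems(1) g0 QV' zQ V'_def z(1)
    unfolding graph_def by (auto simp: sym_def)
  have "\<forall>i < length (xs @ [z]). clique E' (prec_nbrs E' (xs @ [z]) i) \<and> card (prec_nbrs E' (xs @ [z]) i) = min k i"
  proof (intro allI impI)
    fix i assume i: "i < length (xs @ [z])"
    show "clique E' (prec_nbrs E' (xs @ [z]) i) \<and> card (prec_nbrs E' (xs @ [z]) i) = min k i"
    proof (cases "i < length xs")
      case True
      have "prec_nbrs E' (xs @ [z]) i = prec_nbrs E0 xs i"
        by (rule prec_nbrs_snoc[OF dz True]) (auto simp: E'_def)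
      then show ?thesis using xs(3) True clique_mono[of E0 _ E'] unfolding E'_def by auto
    next
      case False
      then have ii: "i = length xs" using i by simp
      have "prec_nbrs E' (xs @ [z]) i = {u \<in> V'. (u, z) \<in> E'}" using prec_nbrs_last[OF dz] ii xs(2) by simp
      also have "\<dots> = Q" using QV' zQ g0 V'_def unfolding E'_def graph_def by auto
      finally show ?thesis using Qcl Q(3) ii xs(1,2) distinct_card clique_mono[of E0 Q E']
        unfolding E'_def by fastforce
    qed
  qed
  then have "ktree k V E'" unfolding ktree_def using gE' dz sz by blast
  moreover have "H \<subseteq> E'"
  proof
    fix e assume e: "e \<in> H"
    obtain a b where ab: "e = (a, b)" by (cases e)
    have abV: "a \<in> V" "b \<in> V" using e ab Suc.prems(3) by auto
    show "e \<in> E'"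
    proof (cases "a = z \<or> b = z")
      case False
      then have "(a, b) \<in> H'" using e ab abV unfolding H'_def V'_def by auto
      then show ?thesis using E0(2) ab unfolding E'_def by auto
    next
      case True
      then show ?thesis
      proof
        assume az: "a = z"
        then have "b \<noteq> z" using e ab Suc.prems(5) by auto
        moreover have "(b, a) \<in> H" using e ab Suc.prems(4) unfolding sym_def by auto
        ultimately have "b \<in> P" unfolding P_def ppz V'_def using abV az by auto
        then show ?thesis using Q(1) az ab unfolding E'_def by auto
      next
        assume bz: "b = z"
        then have "a \<noteq> z" using e ab Suc.prems(5) by auto
        then have "a \<in> P" unfolding P_def ppz V'_def using abV bz e ab by auto
        then show ?thesis using Q(1) bz ab unfolding E'_def by auto
      qed
    qed
  qed
  ultimately show ?case by blast
qed



lemma SL: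
  fixes p :: "'a \<Rightarrow> nat"
  shows "finite V \<Longrightarrow> card V = n \<Longrightarrow> sym H \<Longrightarrow> (\<forall>x. (x, x) \<notin> H) \<Longrightarrow> inj_on p V \<Longrightarrow>
    (\<forall>v\<in>V. clique H (pp p V H v)) \<Longrightarrow> K \<subseteq> V \<Longrightarrow> clique H K \<Longrightarrow> K \<noteq> V \<Longrightarrow>
    \<exists>w\<in>V - K. clique H {u\<in>V. (u, w) \<in> H}"
proof (induction n arbitrary: V K)
  case 0
  then show ?case by auto
next
  case (Suc n)
  then have "V \<noteq> {}" by auto
  then obtain z where z: "z \<in> V" "\<forall>u\<in>V. p u \<le> p z" using max_elem Suc.prems(1) by metis
  define V' where "V' = V - {z}"
  have notz: "\<And>v u. v \<in> V \<Longrightarrow> p u < p v \<Longrightarrow> u \<noteq> z" using z(2) by (metis leD)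
  have fin: "finite V'" using Suc.prems(1) V'_def by simp
  have cV': "card V' = n" using Suc.prems(2) z unfolding V'_def by simp
  have ppz: "pp p V H z = {u\<in>V'. (u, z) \<in> H}"
  proof (intro equalityI subsetI)
    fix u assume "u \<in> pp p V H z" then show "u \<in> {u\<in>V'. (u, z) \<in> H}" unfolding pp_def V'_def by auto
  next
    fix u assume u: "u \<in> {u\<in>V'. (u, z) \<in> H}"
    then have "u \<in> V" "u \<noteq> z" unfolding V'_def by auto
    then have "p u \<noteq> p z" using Suc.prems(5) z(1) unfolding inj_on_def by metis
    then show "u \<in> pp p V H z" using z(2) \<open>u \<in> V\<close> u unfolding pp_def
      by (simp add: order.not_eq_order_implies_strict)
  qed
  have Nz: "{u\<in>V. (u, z) \<in> H} = {u\<in>V'. (u, z) \<in> H}" using Suc.prems(4) V'_def by auto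
  have Nzcl: "clique H {u\<in>V'. (u, z) \<in> H}" using Suc.prems(6) z ppz by auto
  have h4: "inj_on p V'" using Suc.prems(5) V'_def by (auto intro: inj_on_subset)
  have h5: "\<forall>v\<in>V'. clique H (pp p V' H v)"
  proof
    fix v assume v: "v \<in> V'"
    have "pp p V' H v \<subseteq> pp p V H v" unfolding pp_def V'_def by auto
    then show "clique H (pp p V' H v)" using Suc.prems(6) v V'_def clique_subset by blast
  qed
  show ?case
  proof (cases "z \<in> K")
    case False
    then have "z \<in> V - K" using z(1) by auto
    then show ?thesis using Nz Nzcl by (metis (no_types, lifting))
  next
    case zK: True
    have KN: "K \<subseteq> insert z {u\<in>V'. (u, z) \<in> H}"
      using Suc.prems(7,8) unfolding clique_def V'_def using zK by auto
    show ?thesis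
    proof (cases "{u\<in>V'. (u, z) \<in> H} = V'")
      case False
      obtain w where w: "w \<in> V' - {u\<in>V'. (u, z) \<in> H}" "clique H {u\<in>V'. (u, w) \<in> H}"
        using Suc.IH[OF fin cV' Suc.prems(3,4) h4 h5 _ Nzcl False] by blast
      have "(w, z) \<notin> H" using w by auto
      then have "(z, w) \<notin> H" using Suc.prems(3) unfolding sym_def by blast
      then have "{u\<in>V. (u, w) \<in> H} = {u\<in>V'. (u, w) \<in> H}" unfolding V'_def by auto
      moreover have "w \<in> V - K" using w KN V'_def by auto
      ultimately show ?thesis using w by (metis (no_types, lifting))
    next
      case True
      have k1: "K - {z} \<subseteq> V'" using Suc.prems(7) V'_def by auto
      have k2: "clique H (K - {z})" using Suc.prems(8) clique_subset by blast
      have k3: "K - {z} \<noteq> V'" using Suc.prems(7,9) zK V'_def by auto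
      obtain w where w: "w \<in> V' - (K - {z})" "clique H {u\<in>V'. (u, w) \<in> H}"
        using Suc.IH[OF fin cV' Suc.prems(3,4) h4 h5 k1 k2 k3] by blast
      have "(w, z) \<in> H" using w True by auto
      then have "(z, w) \<in> H" using Suc.prems(3) unfolding sym_def by blast
      then have eq: "{u\<in>V. (u, w) \<in> H} = insert z {u\<in>V'. (u, w) \<in> H}" unfolding V'_def using z(1) by auto
      have "clique H (insert z {u\<in>V'. (u, w) \<in> H})"
        apply (rule clique_insert[OF w(2)])
        using True Suc.prems(3) unfolding sym_def by blast
      moreover have "w \<in> V - K" using w V'_def by auto
      ultimately show ?thesis using eq by (intro bexI[of _ w]) auto
    qed
  qed
qed

lemma CF:
  fixes p :: "'a \<Rightarrow> nat"
  shows "finite V \<Longrightarrow> card V = n \<Longrightarrow> sym H \<Longrightarrow> (\<forall>x. (x, x) \<notin> H) \<Longrightarrow> inj_on p V \<Longrightarrow>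
    (\<forall>v\<in>V. clique H (pp p V H v)) \<Longrightarrow> K \<subseteq> V \<Longrightarrow> clique H K \<Longrightarrow>
    \<exists>q :: 'a \<Rightarrow> nat. inj_on q V \<and> (\<forall>v\<in>V. clique H (pp q V H v)) \<and> (\<forall>a\<in>K. \<forall>b\<in>V - K. q a < q b)"
proof (induction n arbitrary: V)
  case 0
  then show ?case by auto
next
  case (Suc n)
  show ?case
  proof (cases "K = V")
    case True
    then show ?thesis using Suc.prems(5,6) by blast
  next
    case False
    obtain w where w: "w \<in> V - K" "clique H {u\<in>V. (u, w) \<in> H}"
      using SL[OF Suc.prems(1) refl Suc.prems(3,4,5,6,7,8) False] by blast
    define V' where "V' = V - {w}"
    have fin: "finite V'" using Suc.prems(1) V'_def by simp
    have cV': "card V' = n" using Suc.prems(2) w unfolding V'_def by simp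
    have h4: "inj_on p V'" using Suc.prems(5) V'_def by (auto intro: inj_on_subset)
    have h5: "\<forall>v\<in>V'. clique H (pp p V' H v)"
    proof
      fix v assume v: "v \<in> V'"
      have "pp p V' H v \<subseteq> pp p V H v" unfolding pp_def V'_def by auto
      then show "clique H (pp p V' H v)" using Suc.prems(6) v V'_def clique_subset by blast
    qed
    have KV': "K \<subseteq> V'" using Suc.prems(7) w V'_def by auto
    obtain q' :: "'a \<Rightarrow> nat" where q': "inj_on q' V'" "\<forall>v\<in>V'. clique H (pp q' V' H v)"
      "\<forall>a\<in>K. \<forall>b\<in>V' - K. q' a < q' b"
      using Suc.IH[OF fin cV' Suc.prems(3,4) h4 h5 KV' Suc.prems(8)] by blast
    define N where "N = Suc (Max (insert 0 (q' ` V')))"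
    have big: "\<And>u. u \<in> V' \<Longrightarrow> q' u < N"
      unfolding N_def using fin by (simp add: le_imp_less_Suc)
    define q where "q = q'(w := N)"
    have qV': "\<And>u. u \<in> V' \<Longrightarrow> q u = q' u" unfolding q_def V'_def by auto
    have "inj_on q V"
    proof (rule inj_onI)
      fix a b assume ab: "a \<in> V" "b \<in> V" "q a = q b"
      show "a = b"
      proof (cases "a = w \<or> b = w")
        case True
        then show ?thesis using ab big qV' unfolding V'_def q_def
          by (metis DiffI fun_upd_same less_irrefl singletonD)
      next
        case False
        then show ?thesis using ab qV' q'(1) unfolding V'_def inj_on_def by auto
      qed
    qed
    moreover have "\<forall>v\<in>V. clique H (pp q V H v)"
    proof
      fix v assume v: "v \<in> V"
      show "clique H (pp q V H v)"
      proof (cases "v = w")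
        case True
        have "pp q V H v \<subseteq> {u\<in>V. (u, w) \<in> H}" unfolding pp_def True by auto
        then show ?thesis using w(2) clique_subset by blast
      next
        case False
        then have vV': "v \<in> V'" using v V'_def by auto
        have "pp q V H v \<subseteq> pp q' V' H v"
        proof
          fix u assume u: "u \<in> pp q V H v"
          have "q v < N" using qV'[OF vV'] big[OF vV'] by simp
          then have "u \<noteq> w" using u unfolding pp_def q_def by auto
          then have "u \<in> V'" using u unfolding pp_def V'_def by auto
          then show "u \<in> pp q' V' H v" using u qV' vV' unfolding pp_def by auto
        qed
        then show ?thesis using q'(2) vV' clique_subset by blast
      qed
    qed
    moreover have "\<forall>a\<in>K. \<forall>b\<in>V - K. q a < q b"
    proof (intro ballI)
      fix a b assume a: "a \<in> K" and b: "b \<in> V - K"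
      have aV': "a \<in> V'" using a KV' by auto
      show "q a < q b"
      proof (cases "b = w")
        case True
        then show ?thesis using qV'[OF aV'] big[OF aV'] unfolding q_def by simp
      next
        case False
        then have "b \<in> V' - K" using b V'_def by auto
        then show ?thesis using q'(3) a qV' aV' by auto
      qed
    qed
    ultimately show ?thesis by blast
  qed
qed



lemma part3:
  fixes dir :: bool and I :: "'i set" and E0 :: "('i \<times> 'i) set"
    and V :: "'i \<Rightarrow> 'a set" and E :: "'i \<Rightarrow> ('a \<times> 'a) set" and R :: "'i \<Rightarrow> 'a set"
    and c t t0 :: nat
  assumes g0: "graph dir I E0" and gi: "\<forall>i\<in>I. graph dir (V i) (E i)"
    and Rs: "\<forall>i\<in>I. R i \<noteq> {} \<and> R i \<subseteq> V i"
    and cl: "\<forall>i\<in>I. clique (und (E i)) (R i) \<and> card (R i) \<le> c \<and>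
             chordal (V i) (und (E i)) \<and> tw_le t (V i) (und (E i))"
    and tw0: "tw_le t0 I (und E0)"
  shows "tw_le (max t (c * (t0 + 1) - 1)) (comp_V I V) (und (comp_E I E0 E R))"
proof -
  define K where "K = max t (c * (t0 + 1) - 1)"
  obtain W0 T where WT: "I \<subseteq> W0" "ktree t0 W0 T" "und E0 \<subseteq> T" using tw0 unfolding tw_le_def by blast
  obtain p0 :: "'i \<Rightarrow> nat" where p0: "inj_on p0 W0" "finite W0" "sym T" "T \<subseteq> W0 \<times> W0"
    "\<forall>v\<in>W0. clique T (pp p0 W0 T v) \<and> card (pp p0 W0 T v) = min t0 (card {u\<in>W0. p0 u < p0 v})"
    using ktree_pos[OF WT(2)] by metis
  have Tirr: "\<forall>x. (x, x) \<notin> T" using WT(2) unfolding ktree_def graph_def by blast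
  have finI: "finite I" using g0 unfolding graph_def by blast
  have E0I: "E0 \<subseteq> I \<times> I" "\<forall>x. (x, x) \<notin> E0" using g0 unfolding graph_def by blast+
  have finV: "\<forall>i\<in>I. finite (V i)" using gi unfolding graph_def by blast
  have EV: "\<forall>i\<in>I. und (E i) \<subseteq> V i \<times> V i" using gi unfolding graph_def und_def by blast
  have Eirr: "\<forall>i\<in>I. \<forall>x. (x, x) \<notin> und (E i)" using gi unfolding graph_def und_def by blast
  have Esym: "\<And>i. sym (und (E i))" unfolding und_def sym_def by blast
  have "\<forall>i\<in>I. \<exists>q :: 'a \<Rightarrow> nat. inj_on q (V i) \<and> (\<forall>v\<in>V i. clique (und (E i)) (pp q (V i) (und (E i)) v))
          \<and> (\<forall>a\<in>R i. \<forall>b\<in>V i - R i. q a < q b)"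
  proof
    fix i assume i: "i \<in> I"
    obtain xs where xs: "distinct xs" "set xs = V i" "\<forall>j < length xs. clique (und (E i)) (prec_nbrs (und (E i)) xs j)"
      using cl i unfolding chordal_def by blast
    have perf: "\<forall>v\<in>V i. clique (und (E i)) (pp (idx xs) (V i) (und (E i)) v)"
    proof
      fix v assume "v \<in> V i"
      then obtain j where j: "j < length xs" "v = xs ! j" using xs(2) by (metis in_set_conv_nth)
      then show "clique (und (E i)) (pp (idx xs) (V i) (und (E i)) v)"
        using pp_idx[OF xs(1) j(1)] xs by simp
    qed
    show "\<exists>q :: 'a \<Rightarrow> nat. inj_on q (V i) \<and> (\<forall>v\<in>V i. clique (und (E i)) (pp q (V i) (und (E i)) v))
          \<and> (\<forall>a\<in>R i. \<forall>b\<in>V i - R i. q a < q b)"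
      using CF[OF _ refl Esym _ _ perf, of "R i"] finV i Eirr inj_idx[OF xs(1)] xs(2) Rs cl by auto
  qed
  then obtain q :: "'i \<Rightarrow> 'a \<Rightarrow> nat" where q: "\<forall>i\<in>I. inj_on (q i) (V i) \<and>
      (\<forall>v\<in>V i. clique (und (E i)) (pp (q i) (V i) (und (E i)) v)) \<and> (\<forall>a\<in>R i. \<forall>b\<in>V i - R i. q i a < q i b)"
    using bchoice[of I] by metis
  have cb: "\<And>i C. i \<in> I \<Longrightarrow> C \<subseteq> V i \<Longrightarrow> clique (und (E i)) C \<Longrightarrow> card C \<le> t + 1"
  proof -
    fix i C assume i: "i \<in> I" and C: "C \<subseteq> V i" "clique (und (E i)) C"
    obtain W E' where "V i \<subseteq> W" "ktree t W E'" "und (E i) \<subseteq> E'" using cl i unfolding tw_le_def by blast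
    then show "card C \<le> t + 1" using ktree_clique_bound C clique_mono by (metis order.trans)
  qed
  define S where "S = Sigma I V"
  define H where "H = {(u, v). (fst u = fst v \<and> fst u \<in> I \<and> (snd u, snd v) \<in> und (E (fst u))) \<or>
     (fst u \<noteq> fst v \<and> fst u \<in> I \<and> fst v \<in> I \<and> (fst u, fst v) \<in> T \<and> snd u \<in> R (fst u) \<and> snd v \<in> R (fst v))}"
  define P where "P = (\<lambda>u. (if snd u \<in> R (fst u) then 0 else 1 :: nat, p0 (fst u), q (fst u) (snd u)))"
  have finS: "finite S" unfolding S_def using finI finV by auto
  have HS: "H \<subseteq> S \<times> S"
  proof
    fix e assume eH: "e \<in> H"
    obtain a b c d where e: "e = ((a, b), (c, d))" by (metis prod.exhaust)
    have "(a = c \<and> a \<in> I \<and> (b, d) \<in> und (E a)) \<or> (a \<noteq> c \<and> a \<in> I \<and> c \<in> I \<and> b \<in> R a \<and> d \<in> R c)"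
      using eH e unfolding H_def by auto
    then show "e \<in> S \<times> S" unfolding S_def e using EV Rs by blast
  qed
  have Hsym: "sym H" unfolding H_def sym_def using Esym p0(3) unfolding sym_def by auto
  have Hirr: "\<forall>x. (x, x) \<notin> H" unfolding H_def using Eirr by auto
  have sub: "und (comp_E I E0 E R) \<subseteq> H"
  proof
    fix e assume e: "e \<in> und (comp_E I E0 E R)"
    have "(i, j) \<in> E0 \<Longrightarrow> (i, j) \<in> T \<and> (j, i) \<in> T \<and> i \<noteq> j \<and> i \<in> I \<and> j \<in> I" for i j
      using WT(3) E0I unfolding und_def by auto
    then show "e \<in> H" using e E0I(2) unfolding und_def comp_E_def H_def by auto
  qed
  have injP: "inj_on P S"
  proof (rule inj_onI)
    fix u v assume uv: "u \<in> S" "v \<in> S" "P u = P v"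
    then have "p0 (fst u) = p0 (fst v)" unfolding P_def by (auto split: if_splits)
    then have f: "fst u = fst v" using p0(1) WT(1) uv unfolding S_def inj_on_def by (metis SigmaE fst_conv subsetD)
    then have "q (fst u) (snd u) = q (fst u) (snd v)" using uv unfolding P_def by (auto split: if_splits)
    then have "snd u = snd v" using q uv f unfolding S_def inj_on_def by auto
    then show "u = v" using f by (simp add: prod_eq_iff)
  qed
  have bound: "\<forall>v\<in>S. clique H (pp P S H v) \<and> card (pp P S H v) \<le> K"
  proof
    fix v assume vS: "v \<in> S"
    obtain i x where v: "v = (i, x)" by (cases v)
    have i: "i \<in> I" "x \<in> V i" using vS v S_def by auto
    show "clique H (pp P S H v) \<and> card (pp P S H v) \<le> K"
    proof (cases "x \<in> R i")
      case False
      define X where "X = pp (q i) (V i) (und (E i)) x"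
      have eq: "pp P S H v = Pair i ` X"
      proof (intro equalityI subsetI)
        fix u assume u: "u \<in> pp P S H v"
        obtain j y where uu: "u = (j, y)" by (cases u)
        have uH: "((j, y), (i, x)) \<in> H" and uS: "(j, y) \<in> S" and uP: "P (j, y) < P (i, x)"
          using u uu v unfolding pp_def by auto
        have ji: "j = i" "(y, x) \<in> und (E i)" using uH False unfolding H_def by auto
        have yV: "y \<in> V i" using uS ji unfolding S_def by auto
        have "q i y < q i x"
        proof (cases "y \<in> R i")
          case True
          then show ?thesis using q i False yV by auto
        next
          case False
          then show ?thesis using uP ji \<open>x \<notin> R i\<close> unfolding P_def by auto
        qed
        then show "u \<in> Pair i ` X" unfolding X_def pp_def using uu ji yV by auto
      next
        fix u assume "u \<in> Pair i ` X"
        then obtain y where y: "u = (i, y)" "y \<in> V i" "q i y < q i x" "(y, x) \<in> und (E i)"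
          unfolding X_def pp_def by auto
        have "P (i, y) < P (i, x)" using y False unfolding P_def by auto
        moreover have "((i, y), (i, x)) \<in> H" using y i unfolding H_def by auto
        ultimately show "u \<in> pp P S H v" unfolding pp_def S_def using y v i by auto
      qed
      have Xcl: "clique (und (E i)) X" using q i unfolding X_def by auto
      have XV: "X \<subseteq> V i" "x \<notin> X" unfolding X_def pp_def by auto
      have "clique (und (E i)) (insert x X)"
        apply (rule clique_insert[OF Xcl]) unfolding X_def pp_def using Esym unfolding sym_def by auto
      then have "card (insert x X) \<le> t + 1" using cb[OF i(1)] XV i(2) by auto
      moreover have "finite X" using XV finV i finite_subset by blast
      ultimately have cX: "card X \<le> t" using XV by simp
      have "clique H (Pair i ` X)" using Xcl i unfolding clique_def H_def by auto
      moreover have "card (Pair i ` X) = card X" by (simp add: card_image inj_on_def)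
      ultimately show ?thesis using eq cX K_def by auto
    next
      case xR: True
      define J where "J = I \<inter> pp p0 W0 T i"
      define B where "B = (\<Union>j\<in>J. {j} \<times> R j)"
      define A where "A = Pair i ` (R i - {x})"
      have sub1: "pp P S H v \<subseteq> A \<union> B"
      proof
        fix u assume u: "u \<in> pp P S H v"
        obtain j y where uu: "u = (j, y)" by (cases u)
        have uH: "((j, y), (i, x)) \<in> H" and uS: "(j, y) \<in> S" and uP: "P (j, y) < P (i, x)"
          using u uu v unfolding pp_def by auto
        show "u \<in> A \<union> B"
        proof (cases "j = i")
          case True
          then have "y \<in> R i" "q i y < q i x" using uP xR unfolding P_def by (auto split: if_splits)
          then show ?thesis unfolding A_def using uu True by auto
        next
          case False
          then have h: "(j, i) \<in> T" "y \<in> R j" "j \<in> I" using uH unfolding H_def by auto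
          then have "p0 j \<le> p0 i" using uP xR unfolding P_def by auto
          moreover have "p0 j \<noteq> p0 i" using p0(1) WT(1) h(3) i(1) False unfolding inj_on_def by blast
          ultimately have "p0 j < p0 i" by simp
          then have "j \<in> J" unfolding J_def pp_def using h WT(1) by auto
          then show ?thesis unfolding B_def using uu h by auto
        qed
      qed
      have iW: "i \<in> W0" using WT(1) i by auto
      have Jcl: "clique T J" using p0(5) iW unfolding J_def clique_def by blast
      have Jn: "\<And>j. j \<in> J \<Longrightarrow> j \<noteq> i \<and> j \<in> I \<and> (j, i) \<in> T \<and> (i, j) \<in> T"
        unfolding J_def pp_def using p0(3) unfolding sym_def by auto
      have "clique H (Pair i ` R i \<union> B)"
        unfolding clique_def
      proof (intro ballI impI)
        fix a b assume a: "a \<in> Pair i ` R i \<union> B" and b: "b \<in> Pair i ` R i \<union> B" and ab: "a \<noteq> b"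
        have clR: "\<And>j y y'. j \<in> I \<Longrightarrow> y \<in> R j \<Longrightarrow> y' \<in> R j \<Longrightarrow> y \<noteq> y' \<Longrightarrow> (y, y') \<in> und (E j)"
          using cl unfolding clique_def by blast
        show "(a, b) \<in> H"
        proof -
          obtain ja ya jb yb where abd: "a = (ja, ya)" "b = (jb, yb)" by (cases a, cases b)
          have ma: "(ja = i \<and> ya \<in> R i) \<or> (ja \<in> J \<and> ya \<in> R ja)" using a abd unfolding B_def by auto
          have mb: "(jb = i \<and> yb \<in> R i) \<or> (jb \<in> J \<and> yb \<in> R jb)" using b abd unfolding B_def by auto
          show ?thesis
          proof (cases "ja = jb")
            case True
            then have "ya \<noteq> yb" using ab abd by auto
            then show ?thesis using True ma mb clR i(1) Jn abd unfolding H_def by auto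
          next
            case False
            have "(ja, jb) \<in> T"
              using ma mb False Jn Jcl unfolding clique_def by blast
            then show ?thesis using False ma mb Jn i(1) abd unfolding H_def by auto
          qed
        qed
      qed
      moreover have "A \<union> B \<subseteq> Pair i ` R i \<union> B" unfolding A_def by auto
      ultimately have cl1: "clique H (pp P S H v)" using sub1 clique_subset by blast
      have finR: "\<And>j. j \<in> I \<Longrightarrow> finite (R j)" using Rs finV finite_subset by metis
      have finJ: "finite J" using finI J_def by auto
      have finAB: "finite (A \<union> B)" unfolding A_def B_def J_def using finR finJ J_def i(1) by auto
      have "card (pp P S H v) \<le> card (A \<union> B)" using sub1 finAB card_mono by blast
      also have "\<dots> \<le> card A + card B" by (rule card_Un_le)
      also have "card A \<le> c - 1"
      proof -
        have "card A = card (R i - {x})" unfolding A_def by (simp add: card_image inj_on_def)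
        also have "\<dots> = card (R i) - 1" using xR finR i by simp
        finally show ?thesis using cl i by auto
      qed
      also have "card B \<le> t0 * c"
      proof -
        have "card B \<le> (\<Sum>j\<in>J. card ({j} \<times> R j))" unfolding B_def by (rule card_UN_le[OF finJ])
        also have "\<dots> \<le> (\<Sum>j\<in>J. c)" apply (rule sum_mono) using cl J_def by (auto simp: card_cartesian_product_singleton)
        also have "\<dots> = card J * c" by simp
        also have "card J \<le> t0"
        proof -
          have "card J \<le> card (pp p0 W0 T i)" unfolding J_def
            by (rule card_mono) (auto simp: pp_def p0(2))
          then show ?thesis using p0(5) iW by auto
        qed
        finally show ?thesis by (simp add: mult_right_mono)
      qed
      finally have "card (pp P S H v) \<le> c - 1 + t0 * c" by simp
      moreover have "c \<ge> 1" using cl Rs i finR by (metis One_nat_def Suc_leI card_gt_0_iff le_trans)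
      ultimately have "card (pp P S H v) \<le> c * (t0 + 1) - 1" by (simp add: algebra_simps)
      then show ?thesis using cl1 K_def by auto
    qed
  qed
  obtain E' where "ktree K S E'" "H \<subseteq> E'" using L[OF finS refl HS Hsym Hirr injP bound] by blast
  then show ?thesis unfolding tw_le_def K_def comp_V_def S_def using sub by blast
qed



definition cyc :: "bool \<Rightarrow> 'a set \<Rightarrow> ('a \<times> 'a) set \<Rightarrow> 'a list \<Rightarrow> bool" where
  "cyc dir A E xs \<longleftrightarrow> distinct xs \<and> set xs \<subseteq> A \<and> length xs \<ge> (if dir then 2 else 3) \<and>
     (\<forall>i < length xs. (xs ! i, xs ! ((i + 1) mod length xs)) \<in> E)"

lemma has_cycle_cyc: "has_cycle dir A E \<longleftrightarrow> (\<exists>xs. cyc dir A E xs)"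
  unfolding has_cycle_def cyc_def by blast

lemma cyc_map:
  assumes "cyc dir A E xs" "inj_on f A" "f ` A \<subseteq> B" "\<forall>a\<in>A. \<forall>b\<in>A. (a, b) \<in> E \<longrightarrow> (f a, f b) \<in> E'"
  shows "cyc dir B E' (map f xs)"
proof -
  have d: "distinct xs" "set xs \<subseteq> A" "length xs \<ge> (if dir then 2 else 3)"
    "\<forall>i < length xs. (xs ! i, xs ! ((i + 1) mod length xs)) \<in> E" using assms(1) unfolding cyc_def by auto
  have "distinct (map f xs)" using d(1,2) assms(2) by (simp add: distinct_map inj_on_subset)
  moreover have "set (map f xs) \<subseteq> B" using d(2) assms(3) by auto
  moreover have "\<forall>i < length (map f xs). (map f xs ! i, map f xs ! ((i + 1) mod length (map f xs))) \<in> E'"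
  proof (intro allI impI)
    fix i assume i: "i < length (map f xs)"
    then have i': "i < length xs" by simp
    have m: "(i + 1) mod length xs < length xs" using i' by (metis less_nat_zero_code mod_less_divisor neq0_conv)
    have "xs ! i \<in> A" "xs ! ((i + 1) mod length xs) \<in> A" using d(2) i' m nth_mem by blast+
    then show "(map f xs ! i, map f xs ! ((i + 1) mod length (map f xs))) \<in> E'"
      using assms(4) d(4) i' m by simp
  qed
  ultimately show ?thesis using d(3) unfolding cyc_def by simp
qed

lemma cyc_rotate:
  assumes "cyc dir A E xs"
  shows "cyc dir A E (rotate m xs)"
proof -
  have d: "distinct xs" "set xs \<subseteq> A" "length xs \<ge> (if dir then 2 else 3)"
    "\<forall>i < length xs. (xs ! i, xs ! ((i + 1) mod length xs)) \<in> E" using assms(1) unfolding cyc_def by auto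
  define n where "n = length xs"
  have n: "n > 0" using d(3) n_def by (auto split: if_splits)
  have "\<forall>i < n. (rotate m xs ! i, rotate m xs ! ((i + 1) mod n)) \<in> E"
  proof (intro allI impI)
    fix i assume i: "i < n"
    define j where "j = (m + i) mod n"
    have j: "j < n" using n j_def by simp
    have "rotate m xs ! i = xs ! j" using nth_rotate[of i xs m] i n_def j_def by simp
    moreover have "rotate m xs ! ((i + 1) mod n) = xs ! ((j + 1) mod n)"
    proof -
      have "rotate m xs ! ((i + 1) mod n) = xs ! ((m + (i + 1) mod n) mod n)"
        using nth_rotate[of "(i + 1) mod n" xs m] n n_def by simp
      also have "(m + (i + 1) mod n) mod n = (j + 1) mod n" unfolding j_def
        by (metis add.assoc mod_add_left_eq mod_add_right_eq)
      finally show ?thesis .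
    qed
    ultimately show "(rotate m xs ! i, rotate m xs ! ((i + 1) mod n)) \<in> E" using d(4) j n_def by simp
  qed
  then show ?thesis using d unfolding cyc_def n_def by simp
qed

lemma fvs_self: "fvs dir V E V"
  unfolding fvs_def has_cycle_def by auto

lemma fvn_le: "finite V \<Longrightarrow> fvs dir V E F \<Longrightarrow> fvn dir V E \<le> card F"
proof -
  assume fin: "finite V" and F: "fvs dir V E F"
  have "{card F | F. fvs dir V E F} \<subseteq> card ` Pow V" unfolding fvs_def by auto
  then have "finite {card F | F. fvs dir V E F}" using fin finite_subset by blast
  then show ?thesis unfolding fvn_def using F by (intro Min_le) auto
qed

lemma fvn_ex: "finite V \<Longrightarrow> \<exists>F. min_fvs dir V E F"
proof -
  assume fin: "finite V"
  have "{card F | F. fvs dir V E F} \<subseteq> card ` Pow V" unfolding fvs_def by auto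
  then have "finite {card F | F. fvs dir V E F}" using fin finite_subset by blast
  moreover have "{card F | F. fvs dir V E F} \<noteq> {}" using fvs_self by blast
  ultimately have "fvn dir V E \<in> {card F | F. fvs dir V E F}" unfolding fvn_def by (rule Min_in)
  then show ?thesis unfolding min_fvs_def by auto
qed

lemma LB:
  fixes dir :: bool and I :: "'i set" and E0 :: "('i \<times> 'i) set"
    and V :: "'i \<Rightarrow> 'a set" and E :: "'i \<Rightarrow> ('a \<times> 'a) set" and R :: "'i \<Rightarrow> 'a set"
  assumes g0: "graph dir I E0" and gi: "\<forall>i\<in>I. graph dir (V i) (E i)"
    and bd: "\<forall>i\<in>I. bad dir (V i) (E i) (R i)"
    and F: "fvs dir (Sigma I V) (comp_E I E0 E R) F"
  defines "S \<equiv> {i\<in>I. card {x. (i, x) \<in> F} = fvn dir (V i) (E i)}"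
  shows "card F = (\<Sum>i\<in>I. card {x. (i, x) \<in> F})"
    and "\<forall>i\<in>S. min_fvs dir (V i) (E i) {x. (i, x) \<in> F}"
    and "fvs dir I E0 (I - S)"
    and "(\<Sum>i\<in>I. fvn dir (V i) (E i)) + card (I - S) \<le> card F"
proof -
  define Fi where "Fi i = {x. (i, x) \<in> F}" for i
  have finI: "finite I" using g0 unfolding graph_def by blast
  have finV: "\<forall>i\<in>I. finite (V i)" using gi unfolding graph_def by blast
  have FS: "F \<subseteq> Sigma I V" using F unfolding fvs_def by blast
  have FSig: "F = Sigma I Fi" using FS unfolding Fi_def by auto
  have FiV: "\<And>i. i \<in> I \<Longrightarrow> Fi i \<subseteq> V i" using FS unfolding Fi_def by auto
  have finFi: "\<And>i. i \<in> I \<Longrightarrow> finite (Fi i)" using FiV finV finite_subset by metis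
  show c1: "card F = (\<Sum>i\<in>I. card {x. (i, x) \<in> F})"
  proof -
    have "card (Sigma I Fi) = (\<Sum>i\<in>I. card (Fi i))" using finI finFi by simp
    then show ?thesis using FSig unfolding Fi_def by simp
  qed
  have fvsi: "\<And>i. i \<in> I \<Longrightarrow> fvs dir (V i) (E i) (Fi i)"
  proof -
    fix i assume i: "i \<in> I"
    have "\<not> has_cycle dir (V i - Fi i) (E i)"
    proof
      assume "has_cycle dir (V i - Fi i) (E i)"
      then obtain xs where "cyc dir (V i - Fi i) (E i) xs" using has_cycle_cyc by metis
      then have "cyc dir (Sigma I V - F) (comp_E I E0 E R) (map (Pair i) xs)"
      proof (rule cyc_map)
        show "inj_on (Pair i) (V i - Fi i)" by (simp add: inj_on_def)
        show "Pair i ` (V i - Fi i) \<subseteq> Sigma I V - F" using i unfolding Fi_def by blast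
        show "\<forall>a\<in>V i - Fi i. \<forall>b\<in>V i - Fi i. (a, b) \<in> E i \<longrightarrow> ((i, a), (i, b)) \<in> comp_E I E0 E R"
          using i unfolding comp_E_def by blast
      qed
      then show False using F has_cycle_cyc unfolding fvs_def by metis
    qed
    then show "fvs dir (V i) (E i) (Fi i)" unfolding fvs_def using FiV i by blast
  qed
  have le: "\<And>i. i \<in> I \<Longrightarrow> fvn dir (V i) (E i) \<le> card (Fi i)" using fvn_le fvsi finV by blast
  show mS: "\<forall>i\<in>S. min_fvs dir (V i) (E i) {x. (i, x) \<in> F}"
    unfolding S_def min_fvs_def using fvsi unfolding Fi_def by auto
  have "\<forall>i\<in>S. \<exists>r. r \<in> R i \<and> r \<notin> Fi i"
  proof
    fix i assume i: "i \<in> S"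
    then have "\<not> R i \<subseteq> Fi i" using mS bd unfolding bad_def Fi_def S_def by blast
    then show "\<exists>r. r \<in> R i \<and> r \<notin> Fi i" by blast
  qed
  then obtain r where r: "\<forall>i\<in>S. r i \<in> R i \<and> r i \<notin> Fi i" by metis
  have RV: "\<forall>i\<in>I. R i \<subseteq> V i" using bd unfolding bad_def by blast
  have "\<not> has_cycle dir (I - (I - S)) E0"
  proof
    assume "has_cycle dir (I - (I - S)) E0"
    then obtain xs where xs: "cyc dir (I - (I - S)) E0 xs" using has_cycle_cyc by metis
    have "I - (I - S) = S" unfolding S_def by auto
    then have "cyc dir S E0 xs" using xs by simp
    then have "cyc dir (Sigma I V - F) (comp_E I E0 E R) (map (\<lambda>j. (j, r j)) xs)"
    proof (rule cyc_map)
      show "inj_on (\<lambda>j. (j, r j)) S" by (auto simp: inj_on_def)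
      show "(\<lambda>j. (j, r j)) ` S \<subseteq> Sigma I V - F" using r RV unfolding S_def Fi_def by auto
      show "\<forall>a\<in>S. \<forall>b\<in>S. (a, b) \<in> E0 \<longrightarrow> ((a, r a), (b, r b)) \<in> comp_E I E0 E R"
        using r unfolding comp_E_def by blast
    qed
    then show False using F has_cycle_cyc unfolding fvs_def by metis
  qed
  then show "fvs dir I E0 (I - S)" unfolding fvs_def by blast
  have "fvn dir (V i) (E i) + (if i \<in> I - S then 1 else 0) \<le> card (Fi i)" if i: "i \<in> I" for i
  proof (cases "i \<in> S")
    case True
    then show ?thesis using le[OF i] by simp
  next
    case False
    then have "card (Fi i) \<noteq> fvn dir (V i) (E i)" using i unfolding S_def Fi_def by auto
    then show ?thesis using le[OF i] False i by simp
  qed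
  then have "(\<Sum>i\<in>I. fvn dir (V i) (E i) + (if i \<in> I - S then 1 else 0)) \<le> (\<Sum>i\<in>I. card (Fi i))"
    by (rule sum_mono)
  moreover have "(\<Sum>i\<in>I. (if i \<in> I - S then 1 else 0 :: nat)) = card (I - S)"
  proof -
    have eqIS: "I \<inter> {i. i \<notin> S} = I - S" by auto
    show ?thesis using finI eqIS by (simp add: sum.If_cases)
  qed
  ultimately show "(\<Sum>i\<in>I. fvn dir (V i) (E i)) + card (I - S) \<le> card F"
    using c1 unfolding Fi_def by (simp add: sum.distrib)
qed



lemma all_cross:
  fixes ys :: "('i \<times> 'a) list"
  assumes d: "distinct ys" and n: "n = length ys" "n \<ge> 2"
    and cr: "\<forall>m<n. fst (ys ! m) \<noteq> fst (ys ! ((m + 1) mod n)) \<longrightarrow> P (ys ! m) \<and> P (ys ! ((m + 1) mod n))"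
    and Pk: "\<forall>a b. P a \<longrightarrow> P b \<longrightarrow> fst a = fst b \<longrightarrow> a = b"
    and lst: "fst (ys ! (n - 1)) \<noteq> fst (ys ! 0)"
  shows "\<forall>m<n. fst (ys ! m) \<noteq> fst (ys ! ((m + 1) mod n))"
proof (rule ccontr)
  define cross where "cross m \<longleftrightarrow> fst (ys ! m) \<noteq> fst (ys ! ((m + 1) mod n))" for m
  assume "\<not> (\<forall>m<n. fst (ys ! m) \<noteq> fst (ys ! ((m + 1) mod n)))"
  then have ex: "\<exists>m. m < n \<and> \<not> cross m" unfolding cross_def by blast
  define k where "k = (LEAST m. m < n \<and> \<not> cross m)"
  have k: "k < n" "\<not> cross k" using LeastI_ex[OF ex] unfolding k_def by auto
  have kmin: "\<And>m. m < k \<Longrightarrow> cross m" using not_less_Least k(1) unfolding k_def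
    by (metis order.strict_trans)
  have nm1: "(n - 1 + 1) mod n = 0"
  proof -
    have "n - 1 + 1 = n" using n by simp
    then show ?thesis by simp
  qed
  have lastc: "cross (n - 1)" unfolding cross_def using lst nm1 by simp
  have kn: "k < n - 1" using k lastc by (metis Suc_pred' One_nat_def diff_less_mono2 le_neq_implies_less less_Suc_eq_le less_one n(2) not_numeral_le_zero zero_less_iff_neq_zero)
  have Pk': "P (ys ! k)"
  proof (cases "k = 0")
    case True
    then show ?thesis using cr lastc nm1 n unfolding cross_def by (metis diff_less zero_less_numeral order.strict_trans2 zero_less_one)
  next
    case False
    then have "cross (k - 1)" using kmin by simp
    moreover have "(k - 1 + 1) mod n = k" using False k by simp
    ultimately show ?thesis using cr k unfolding cross_def by (metis less_imp_diff_less)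
  qed
  have ex2: "\<exists>a. k < a \<and> a < n \<and> cross a" using kn lastc n by (intro exI[of _ "n - 1"]) auto
  define a where "a = (LEAST a. k < a \<and> a < n \<and> cross a)"
  have a: "k < a" "a < n" "cross a" using LeastI_ex[OF ex2] unfolding a_def by auto
  have amin: "\<And>m. k \<le> m \<Longrightarrow> m < a \<Longrightarrow> \<not> cross m"
  proof -
    fix m assume m: "k \<le> m" "m < a"
    show "\<not> cross m"
    proof (cases "m = k")
      case True then show ?thesis using k by simp
    next
      case False
      then have "k < m" "m < n" using m a by auto
      then show ?thesis using not_less_Least[of m "\<lambda>a. k < a \<and> a < n \<and> cross a"] m(2) unfolding a_def by blast
    qed
  qed
  have same: "\<And>dd. k + dd \<le> a \<Longrightarrow> fst (ys ! (k + dd)) = fst (ys ! k)"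
  proof -
    fix dd show "k + dd \<le> a \<Longrightarrow> fst (ys ! (k + dd)) = fst (ys ! k)"
    proof (induction dd)
      case 0 then show ?case by simp
    next
      case (Suc dd)
      then have h: "k + dd < a" by simp
      then have "\<not> cross (k + dd)" using amin by simp
      moreover have "(k + dd + 1) mod n = k + dd + 1" using Suc.prems a by simp
      ultimately show ?case using Suc h unfolding cross_def by simp
    qed
  qed
  have "fst (ys ! a) = fst (ys ! k)" using same[of "a - k"] a by simp
  moreover have "P (ys ! a)" using cr a unfolding cross_def by blast
  ultimately have "ys ! a = ys ! k" using Pk Pk' by blast
  then have "a = k" using d a k n nth_eq_iff_index_eq by metis
  then show False using a by simp
qed

lemma UB:
  fixes dir :: bool and I :: "'i set" and E0 :: "('i \<times> 'i) set"
    and V :: "'i \<Rightarrow> 'a set" and E :: "'i \<Rightarrow> ('a \<times> 'a) set" and R :: "'i \<Rightarrow> 'a set"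
  assumes g0: "graph dir I E0" and gi: "\<forall>i\<in>I. graph dir (V i) (E i)"
    and mb: "\<forall>i\<in>I. min_bad dir (V i) (E i) (R i)" and ne: "\<forall>i\<in>I. R i \<noteq> {}"
  shows "fvn dir (Sigma I V) (comp_E I E0 E R) \<le> fvn dir I E0 + (\<Sum>i\<in>I. fvn dir (V i) (E i))"
proof -
  have finI: "finite I" using g0 unfolding graph_def by blast
  have finV: "\<forall>i\<in>I. finite (V i)" using gi unfolding graph_def by blast
  have E0irr: "\<forall>x. (x, x) \<notin> E0" using g0 unfolding graph_def by blast
  have Eirr: "\<forall>i\<in>I. \<forall>x. (x, x) \<notin> E i" using gi unfolding graph_def by blast
  obtain F0 where F0: "min_fvs dir I E0 F0" using fvn_ex finI by blast
  have F0I: "F0 \<subseteq> I" "\<not> has_cycle dir (I - F0) E0" "card F0 = fvn dir I E0"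
    using F0 unfolding min_fvs_def fvs_def by auto
  have "\<forall>i\<in>I. \<exists>r. r \<in> R i \<and> (\<exists>G. min_fvs dir (V i) (E i) G \<and> R i - {r} \<subseteq> G \<and> r \<notin> G)"
  proof
    fix i assume i: "i \<in> I"
    obtain r where r: "r \<in> R i" using ne i by blast
    have bd: "bad dir (V i) (E i) (R i)" using mb i unfolding min_bad_def by blast
    have "\<not> bad dir (V i) (E i) (R i - {r})" using mb i r unfolding min_bad_def by blast
    moreover have "R i - {r} \<subseteq> V i" using bd unfolding bad_def by blast
    ultimately obtain G where G: "min_fvs dir (V i) (E i) G" "R i - {r} \<subseteq> G" unfolding bad_def by blast
    have "r \<notin> G" using G bd r unfolding bad_def by blast
    then show "\<exists>r. r \<in> R i \<and> (\<exists>G. min_fvs dir (V i) (E i) G \<and> R i - {r} \<subseteq> G \<and> r \<notin> G)"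
      using r G by blast
  qed
  then obtain r where r: "\<forall>i\<in>I. r i \<in> R i \<and> (\<exists>G. min_fvs dir (V i) (E i) G \<and> R i - {r i} \<subseteq> G \<and> r i \<notin> G)"
    by metis
  then obtain G where G: "\<forall>i\<in>I. min_fvs dir (V i) (E i) (G i) \<and> R i - {r i} \<subseteq> G i \<and> r i \<notin> G i"
    by metis
  have RV: "\<forall>i\<in>I. R i \<subseteq> V i" using mb unfolding min_bad_def bad_def by blast
  have GV: "\<forall>i\<in>I. G i \<subseteq> V i" "\<forall>i\<in>I. \<not> has_cycle dir (V i - G i) (E i)"
    "\<forall>i\<in>I. card (G i) = fvn dir (V i) (E i)"
    using G unfolding min_fvs_def fvs_def by auto
  define Fi where "Fi i = (if i \<in> F0 then insert (r i) (G i) else G i)" for i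
  define F where "F = Sigma I Fi"
  have finG: "\<And>i. i \<in> I \<Longrightarrow> finite (G i)" using GV finV finite_subset by metis
  have cFi: "\<And>i. i \<in> I \<Longrightarrow> card (Fi i) = fvn dir (V i) (E i) + (if i \<in> F0 then 1 else 0)"
    unfolding Fi_def using G GV finG by auto
  have "card F = (\<Sum>i\<in>I. card (Fi i))" unfolding F_def using finI finG Fi_def by simp
  also have "\<dots> = (\<Sum>i\<in>I. fvn dir (V i) (E i) + (if i \<in> F0 then 1 else 0))" using cFi by simp
  also have "\<dots> = (\<Sum>i\<in>I. fvn dir (V i) (E i)) + card F0"
  proof -
    have "(\<Sum>i\<in>I. (if i \<in> F0 then 1 else 0 :: nat)) = card F0"
      using finI F0I(1) by (simp add: sum.If_cases Int_absorb1)
    then show ?thesis by (simp add: sum.distrib)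
  qed
  finally have cF: "card F = fvn dir I E0 + (\<Sum>i\<in>I. fvn dir (V i) (E i))" using F0I by simp
  have FiV: "\<And>i. i \<in> I \<Longrightarrow> Fi i \<subseteq> V i"
  proof -
    fix i assume i: "i \<in> I"
    have "r i \<in> V i" using RV r i by blast
    then show "Fi i \<subseteq> V i" unfolding Fi_def using GV(1) i by auto
  qed
  have FS: "F \<subseteq> Sigma I V" unfolding F_def using FiV by auto
  define Dv where "Dv = Sigma I V - F"
  define DE where "DE = comp_E I E0 E R"
  have DEirr: "\<forall>a. (a, a) \<notin> DE" unfolding DE_def comp_E_def using E0irr Eirr by auto
  have CR: "\<And>a b. a \<in> Dv \<Longrightarrow> b \<in> Dv \<Longrightarrow> (a, b) \<in> DE \<Longrightarrow> fst a \<noteq> fst b \<Longrightarrow>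
      snd a = r (fst a) \<and> fst a \<notin> F0 \<and> snd b = r (fst b) \<and> fst b \<notin> F0 \<and> (fst a, fst b) \<in> E0"
  proof -
    fix a b assume ab: "a \<in> Dv" "b \<in> Dv" "(a, b) \<in> DE" "fst a \<noteq> fst b"
    obtain i x j y where ij: "a = (i, x)" "b = (j, y)" by (metis prod.exhaust)
    have e: "(i, j) \<in> E0" "x \<in> R i" "y \<in> R j" using ab ij unfolding DE_def comp_E_def by auto
    have ii: "i \<in> I" "x \<notin> Fi i" "j \<in> I" "y \<notin> Fi j" using ab ij unfolding Dv_def F_def by auto
    have "x = r i" using ii e G unfolding Fi_def by (auto split: if_splits)
    moreover have "y = r j" using ii e G unfolding Fi_def by (auto split: if_splits)
    ultimately show "snd a = r (fst a) \<and> fst a \<notin> F0 \<and> snd b = r (fst b) \<and> fst b \<notin> F0 \<and> (fst a, fst b) \<in> E0"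
      using ii e ij unfolding Fi_def by auto
  qed
  have "\<not> has_cycle dir Dv DE"
  proof
    assume "has_cycle dir Dv DE"
    then obtain xs where xs: "cyc dir Dv DE xs" using has_cycle_cyc by metis
    define n where "n = length xs"
    have xd: "distinct xs" "set xs \<subseteq> Dv" "n \<ge> 2" "\<forall>m<n. (xs ! m, xs ! ((m + 1) mod n)) \<in> DE"
      using xs unfolding cyc_def n_def by (auto split: if_splits)
    show False
    proof (cases "\<forall>m<n. fst (xs ! m) = fst (xs ! ((m + 1) mod n))")
      case True
      define i where "i = fst (xs ! 0)"
      have allsame: "\<And>m. m < n \<Longrightarrow> fst (xs ! m) = i"
      proof -
        fix m show "m < n \<Longrightarrow> fst (xs ! m) = i"
        proof (induction m)
          case 0 then show ?case unfolding i_def by simp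
        next
          case (Suc m)
          then have "(m + 1) mod n = Suc m" by simp
          then show ?case using True Suc by (metis Suc_lessD Suc_eq_plus1)
        qed
      qed
      have fs: "\<forall>z\<in>set xs. fst z = i" using allsame unfolding n_def by (metis in_set_conv_nth)
      have iI: "i \<in> I" using xd(2) xd(3) fs unfolding Dv_def n_def
        by (metis (no_types, lifting) DiffD1 SigmaE fst_conv length_0_conv list.set_intros(1) list.exhaust not_numeral_le_zero subsetD)
      have "cyc dir (set xs) DE xs" using xs unfolding cyc_def by auto
      then have "cyc dir (V i - G i) (E i) (map snd xs)"
      proof (rule cyc_map)
        show "inj_on snd (set xs)" using fs by (metis inj_onI prod_eq_iff)
        show "snd ` set xs \<subseteq> V i - G i"
        proof
          fix y assume "y \<in> snd ` set xs"
          then obtain z where z: "z \<in> set xs" "y = snd z" by blast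
          then have "z \<in> Dv" "fst z = i" using xd fs by auto
          then show "y \<in> V i - G i" using z unfolding Dv_def F_def Fi_def by (cases z) (auto split: if_splits)
        qed
        show "\<forall>a\<in>set xs. \<forall>b\<in>set xs. (a, b) \<in> DE \<longrightarrow> (snd a, snd b) \<in> E i"
        proof (intro ballI impI)
          fix a b assume ab: "a \<in> set xs" "b \<in> set xs" "(a, b) \<in> DE"
          then have "fst a = i" "fst b = i" using fs by auto
          then show "(snd a, snd b) \<in> E i" using ab(3) E0irr unfolding DE_def comp_E_def by auto
        qed
      qed
      then show False using GV iI has_cycle_cyc by metis
    next
      case False
      then obtain k where k: "k < n" "fst (xs ! k) \<noteq> fst (xs ! ((k + 1) mod n))" by blast
      define ys where "ys = rotate (Suc k) xs"
      have ycyc: "cyc dir Dv DE ys" using cyc_rotate xs unfolding ys_def by blast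
      have yd: "distinct ys" "length ys = n" "set ys = set xs"
        using xd unfolding ys_def n_def by auto
      have ye: "\<forall>m<n. (ys ! m, ys ! ((m + 1) mod n)) \<in> DE" using ycyc yd unfolding cyc_def by auto
      have n0: "0 < length xs" "n - 1 < length xs" using xd(3) n_def by auto
      have y0: "ys ! 0 = xs ! ((k + 1) mod n)" using nth_rotate[OF n0(1), of "Suc k"] unfolding ys_def n_def by simp
      have "ys ! (n - 1) = xs ! ((Suc k + (n - 1)) mod n)" using nth_rotate[OF n0(2), of "Suc k"] unfolding ys_def n_def by simp
      also have "(Suc k + (n - 1)) mod n = k" using k xd(3) by simp
      finally have yl: "ys ! (n - 1) = xs ! k" .
      have yV: "\<And>m. m < n \<Longrightarrow> ys ! m \<in> Dv" using yd xd(2) by (metis nth_mem subsetD)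
      have cr: "\<forall>m<n. fst (ys ! m) \<noteq> fst (ys ! ((m + 1) mod n)) \<longrightarrow>
          (\<lambda>z. snd z = r (fst z)) (ys ! m) \<and> (\<lambda>z. snd z = r (fst z)) (ys ! ((m + 1) mod n))"
      proof (intro allI impI)
        fix m assume m: "m < n" "fst (ys ! m) \<noteq> fst (ys ! ((m + 1) mod n))"
        have "(m + 1) mod n < n" using m by simp
        then show "(\<lambda>z. snd z = r (fst z)) (ys ! m) \<and> (\<lambda>z. snd z = r (fst z)) (ys ! ((m + 1) mod n))"
          using CR[OF yV[OF m(1)] yV ye[rule_format, OF m(1)] m(2)] by simp
      qed
      have allc: "\<forall>m<n. fst (ys ! m) \<noteq> fst (ys ! ((m + 1) mod n))"
        apply (rule all_cross[OF yd(1) yd(2)[symmetric] xd(3) cr])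
        using k y0 yl by (auto simp: prod_eq_iff)
      have rv: "\<forall>z\<in>set ys. snd z = r (fst z) \<and> fst z \<notin> F0 \<and> fst z \<in> I"
      proof
        fix z assume "z \<in> set ys"
        then obtain m where m: "m < n" "z = ys ! m" using yd by (metis in_set_conv_nth)
        have "(m + 1) mod n < n" using m by simp
        then have "snd z = r (fst z) \<and> fst z \<notin> F0"
          using CR[OF yV[OF m(1)] yV ye[rule_format, OF m(1)]] allc m by blast
        moreover have "fst z \<in> I" using yV[OF m(1)] m(2) unfolding Dv_def by (metis DiffD1 SigmaE fst_conv)
        ultimately show "snd z = r (fst z) \<and> fst z \<notin> F0 \<and> fst z \<in> I" by blast
      qed
      have "cyc dir (set ys) DE ys" using ycyc unfolding cyc_def by auto
      then have "cyc dir (I - F0) E0 (map fst ys)"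
      proof (rule cyc_map)
        show "inj_on fst (set ys)" using rv by (metis inj_onI prod_eq_iff)
        show "fst ` set ys \<subseteq> I - F0" using rv by auto
        show "\<forall>a\<in>set ys. \<forall>b\<in>set ys. (a, b) \<in> DE \<longrightarrow> (fst a, fst b) \<in> E0"
        proof (intro ballI impI)
          fix a b assume ab: "a \<in> set ys" "b \<in> set ys" "(a, b) \<in> DE"
          have "a \<noteq> b" using ab DEirr by metis
          then have "fst a \<noteq> fst b" using rv ab by (metis prod_eq_iff)
          moreover have "a \<in> Dv" "b \<in> Dv" using ab yd xd by auto
          ultimately show "(fst a, fst b) \<in> E0" using CR ab by blast
        qed
      qed
      then show False using F0I has_cycle_cyc by metis
    qed
  qed
  then have "fvs dir (Sigma I V) (comp_E I E0 E R) F" unfolding fvs_def Dv_def DE_def using FS by blast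
  then show ?thesis using fvn_le[of "Sigma I V"] cF finI finV by (metis finite_SigmaI)
qed


theorem mainTheorem10:
  fixes dir :: bool
    and I :: "'i set" and E0 :: "('i \<times> 'i) set" and R0 :: "'i set"
    and V :: "'i \<Rightarrow> 'a set" and E :: "'i \<Rightarrow> ('a \<times> 'a) set" and R :: "'i \<Rightarrow> 'a set"
    and c t t0 :: nat
  assumes "graph dir I E0"
    and "\<forall>i\<in>I. graph dir (V i) (E i)"
    and "R0 \<noteq> {}" and "bad dir I E0 R0"
    and "\<forall>i\<in>I. R i \<noteq> {} \<and> bad dir (V i) (E i) (R i)"
  shows "card (comp_V I V) = (\<Sum>i\<in>I. card (V i)) \<and>
    fvn dir (comp_V I V) (comp_E I E0 E R) \<ge> fvn dir I E0 + (\<Sum>i\<in>I. fvn dir (V i) (E i)) \<and>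
    ((\<forall>i\<in>I. min_bad dir (V i) (E i) (R i)) \<longrightarrow>
       fvn dir (comp_V I V) (comp_E I E0 E R) = fvn dir I E0 + (\<Sum>i\<in>I. fvn dir (V i) (E i)) \<and>
       bad dir (comp_V I V) (comp_E I E0 E R) (\<Union>i\<in>R0. {i} \<times> R i)) \<and>
    ((\<forall>i\<in>I. min_bad dir (V i) (E i) (R i)) \<and>
     (\<forall>i\<in>I. clique (und (E i)) (R i) \<and> card (R i) \<le> c \<and>
             chordal (V i) (und (E i)) \<and> tw_le t (V i) (und (E i))) \<and>
     tw_le t0 I (und E0) \<longrightarrow>
       tw_le (max t (c * (t0 + 1) - 1)) (comp_V I V) (und (comp_E I E0 E R)))"
proof -
  note g0 = assms(1) and gi = assms(2)
  have finI: "finite I" using g0 unfolding graph_def by blast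
  have finV: "\<forall>i\<in>I. finite (V i)" using gi unfolding graph_def by blast
  have bd: "\<forall>i\<in>I. bad dir (V i) (E i) (R i)" using assms(5) by blast
  have Rs: "\<forall>i\<in>I. R i \<noteq> {} \<and> R i \<subseteq> V i" using assms(5) unfolding bad_def by blast
  have finS: "finite (Sigma I V)" using finI finV by auto
  have c1: "card (comp_V I V) = (\<Sum>i\<in>I. card (V i))" unfolding comp_V_def using finI finV by simp
  have lower: "fvn dir I E0 + (\<Sum>i\<in>I. fvn dir (V i) (E i)) \<le> fvn dir (Sigma I V) (comp_E I E0 E R)"
  proof -
    obtain F where F: "min_fvs dir (Sigma I V) (comp_E I E0 E R) F" using fvn_ex finS by blast
    then have Ff: "fvs dir (Sigma I V) (comp_E I E0 E R) F" unfolding min_fvs_def by blast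
    define S where "S = {i\<in>I. card {x. (i, x) \<in> F} = fvn dir (V i) (E i)}"
    have l3: "fvs dir I E0 (I - S)" using LB(3)[OF g0 gi bd Ff] unfolding S_def .
    have l4: "(\<Sum>i\<in>I. fvn dir (V i) (E i)) + card (I - S) \<le> card F" using LB(4)[OF g0 gi bd Ff] unfolding S_def .
    have "fvn dir I E0 \<le> card (I - S)" using fvn_le[OF finI l3] .
    then show ?thesis using l4 F unfolding min_fvs_def by simp
  qed
  have p2: "(\<forall>i\<in>I. min_bad dir (V i) (E i) (R i)) \<longrightarrow>
       fvn dir (comp_V I V) (comp_E I E0 E R) = fvn dir I E0 + (\<Sum>i\<in>I. fvn dir (V i) (E i)) \<and>
       bad dir (comp_V I V) (comp_E I E0 E R) (\<Union>i\<in>R0. {i} \<times> R i)"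
  proof
    assume mb: "\<forall>i\<in>I. min_bad dir (V i) (E i) (R i)"
    have eq: "fvn dir (Sigma I V) (comp_E I E0 E R) = fvn dir I E0 + (\<Sum>i\<in>I. fvn dir (V i) (E i))"
      using lower UB[OF g0 gi mb] Rs by auto
    have R0I: "R0 \<subseteq> I" using assms(4) unfolding bad_def by blast
    have sub: "(\<Union>i\<in>R0. {i} \<times> R i) \<subseteq> Sigma I V" using R0I Rs by blast
    have "\<not> (\<exists>F. min_fvs dir (Sigma I V) (comp_E I E0 E R) F \<and> (\<Union>i\<in>R0. {i} \<times> R i) \<subseteq> F)"
    proof
      assume "\<exists>F. min_fvs dir (Sigma I V) (comp_E I E0 E R) F \<and> (\<Union>i\<in>R0. {i} \<times> R i) \<subseteq> F"
      then obtain F where F: "min_fvs dir (Sigma I V) (comp_E I E0 E R) F" "(\<Union>i\<in>R0. {i} \<times> R i) \<subseteq> F"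
        by blast
      then have Ff: "fvs dir (Sigma I V) (comp_E I E0 E R) F" unfolding min_fvs_def by blast
      define S where "S = {i\<in>I. card {x. (i, x) \<in> F} = fvn dir (V i) (E i)}"
      have l2: "\<forall>i\<in>S. min_fvs dir (V i) (E i) {x. (i, x) \<in> F}" using LB(2)[OF g0 gi bd Ff] unfolding S_def .
      have l3: "fvs dir I E0 (I - S)" using LB(3)[OF g0 gi bd Ff] unfolding S_def .
      have l4: "(\<Sum>i\<in>I. fvn dir (V i) (E i)) + card (I - S) \<le> card F" using LB(4)[OF g0 gi bd Ff] unfolding S_def .
      have "fvn dir I E0 \<le> card (I - S)" using fvn_le[OF finI l3] .
      moreover have "card F = fvn dir I E0 + (\<Sum>i\<in>I. fvn dir (V i) (E i))" using F(1) eq unfolding min_fvs_def by simp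
      ultimately have "card (I - S) = fvn dir I E0" using l4 by simp
      then have "min_fvs dir I E0 (I - S)" using l3 unfolding min_fvs_def by simp
      then have "\<not> R0 \<subseteq> I - S" using assms(4) unfolding bad_def by blast
      then obtain i where i: "i \<in> R0" "i \<in> S" using R0I by blast
      have "R i \<subseteq> {x. (i, x) \<in> F}" using F(2) i by blast
      moreover have "min_fvs dir (V i) (E i) {x. (i, x) \<in> F}" using l2 i by blast
      moreover have "i \<in> I" using i R0I by blast
      ultimately show False using bd unfolding bad_def by blast
    qed
    then have "bad dir (Sigma I V) (comp_E I E0 E R) (\<Union>i\<in>R0. {i} \<times> R i)" unfolding bad_def using sub by blast
    then show "fvn dir (comp_V I V) (comp_E I E0 E R) = fvn dir I E0 + (\<Sum>i\<in>I. fvn dir (V i) (E i)) \<and>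
       bad dir (comp_V I V) (comp_E I E0 E R) (\<Union>i\<in>R0. {i} \<times> R i)" using eq unfolding comp_V_def by simp
  qed
  have p3: "(\<forall>i\<in>I. min_bad dir (V i) (E i) (R i)) \<and>
     (\<forall>i\<in>I. clique (und (E i)) (R i) \<and> card (R i) \<le> c \<and>
             chordal (V i) (und (E i)) \<and> tw_le t (V i) (und (E i))) \<and>
     tw_le t0 I (und E0) \<longrightarrow>
       tw_le (max t (c * (t0 + 1) - 1)) (comp_V I V) (und (comp_E I E0 E R))"
    using part3[OF g0 gi Rs] by blast
  show ?thesis using c1 lower p2 p3 unfolding comp_V_def by simp
qed

end
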